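(* Let $\mathbf{K}$ be a field of characteristic different from $2$ and let $A$ be a (not necessarily associative) algebra over $\mathbf{K}$ satisfying, for all $a,b\in A$, the identities $\langle a,a,b\rangle=0$, $\langle a,b,a\rangle=0$ and $\langle a,b,ab\rangle=0$, where $\langle a,b,c\rangle=(ab)c-a(bc)+b(ac)$. Then for all $a,b,c,d\in A$: (a) $\langle a,b,c\rangle$ is skew-symmetric in $a,b,c$; (b) $\langle ab,c,d\rangle+\langle ba,c,d\rangle=0$.
   Context: The product in $A$ is an arbitrary bilinear multiplication; no associativity or commutativity is assumed. *)

theory Defs
  imports Complex_Main
begin

definition bilinear_product ::
  "('k::field \<Rightarrow> 'a::ab_group_add \<Rightarrow> 'a) \<Rightarrow> ('a \<Rightarrow> 'a \<Rightarrow> 'a) \<Rightarrow> bool" where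
  "bilinear_product scale mult \<longleftrightarrow>
     (\<forall>x y z. mult (x + y) z = mult x z + mult y z) \<and>
     (\<forall>x y z. mult x (y + z) = mult x y + mult x z) \<and>
     (\<forall>k x y. mult (scale k x) y = scale k (mult x y)) \<and>
     (\<forall>k x y. mult x (scale k y) = scale k (mult x y))"

definition tri :: "('a::ab_group_add \<Rightarrow> 'a \<Rightarrow> 'a) \<Rightarrow> 'a \<Rightarrow> 'a \<Rightarrow> 'a \<Rightarrow> 'a" where
  "tri mult a b c = mult (mult a b) c - mult a (mult b c) + mult b (mult a c)"

end

theory Submission
  imports Defs
begin

theorem lemma2:
  fixes scale :: "'k::field \<Rightarrow> 'a::ab_group_add \<Rightarrow> 'a"
    and mult :: "'a \<Rightarrow> 'a \<Rightarrow> 'a"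
  assumes "vector_space scale"
    and "(2::'k) \<noteq> 0"
    and "bilinear_product scale mult"
    and "\<And>a b. tri mult a a b = 0"
    and "\<And>a b. tri mult a b a = 0"
    and "\<And>a b. tri mult a b (mult a b) = 0"
  shows "(\<forall>a b c. tri mult a b c = - tri mult b a c \<and>
                  tri mult a b c = - tri mult a c b \<and>
                  tri mult a b c = - tri mult c b a)
       \<and> (\<forall>a b c d. tri mult (mult a b) c d + tri mult (mult b a) c d = 0)"
proof -
  have L: "\<And>x y z. mult (x + y) z = mult x z + mult y z"
   and R: "\<And>x y z. mult x (y + z) = mult x y + mult x z"
    using assms(3) unfolding bilinear_product_def by auto
  have L0: "\<And>z. mult 0 z = 0"
    by (metis L add_cancel_right_right add_0)
  have R0: "\<And>z. mult z 0 = 0"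
    by (metis R add_cancel_right_right add_0)
  have s12: "\<And>a b c. tri mult a b c = - tri mult b a c"
  proof -
    fix a b c
    have "0 = tri mult (a+b) (a+b) c" using assms(4) by simp
    also have "\<dots> = tri mult a a c + tri mult a b c + tri mult b a c + tri mult b b c"
      unfolding tri_def by (simp add: L R algebra_simps)
    finally show "tri mult a b c = - tri mult b a c" using assms(4)
      by (simp add: eq_neg_iff_add_eq_0)
  qed
  have s13: "\<And>a b c. tri mult a b c = - tri mult c b a"
  proof -
    fix a b c
    have "0 = tri mult (a+c) b (a+c)" using assms(5) by simp
    also have "\<dots> = tri mult a b a + tri mult a b c + tri mult c b a + tri mult c b c"
      unfolding tri_def by (simp add: L R algebra_simps)
    finally show "tri mult a b c = - tri mult c b a" using assms(5)
      by (simp add: eq_neg_iff_add_eq_0)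
  qed
  have s23: "\<And>a b c. tri mult a b c = - tri mult a c b"
    by (metis s12 s13 minus_minus)
  have Z: "\<And>a b c. mult (mult a b + mult b a) c = 0"
  proof -
    fix a b c
    have "tri mult a b c + tri mult b a c = 0" using s12[of a b c] by simp
    then show "mult (mult a b + mult b a) c = 0"
      unfolding tri_def by (simp add: L algebra_simps)
  qed
  have "tri mult (mult a b) c d + tri mult (mult b a) c d = 0" for a b c d
  proof -
    have "tri mult (mult a b) c d + tri mult (mult b a) c d
        = mult (mult (mult a b + mult b a) c) d - mult (mult a b + mult b a) (mult c d)
          + mult c (mult (mult a b + mult b a) d)"
      unfolding tri_def by (simp add: L R algebra_simps)
    also have "\<dots> = 0" by (simp add: Z L0 R0)
    finally show ?thesis .
  qed
  then show ?thesis using s12 s13 s23 by blast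
qed

end
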